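(* Let $N=2$ with $r_{11}=1$ and $g\in(-2,2)$, $h=\sqrt{1-g^2/4}$. The length of the Finsleroid Indicatrix $\{R:K(g;R)=1\}$, measured with the Finsler metric, i.e. $L=\oint\sqrt{g_{pq}(g;R)\,dR^p\,dR^q}$ taken once around the closed curve, equals $$L=\frac{2\pi}{h}.$$ Consequently $L\ge 2\pi$, with $L=2\pi$ if and only if $g=0$, and $L\to\infty$ as $|g|\to2$.
   Context: Here $V_2=\mathbb{R}^2$ with points $R=(R^1,R^2)$, $Z=R^2$, $q(R)=|R^1|$; $G=g/h$. Define $B(g;R)=Z^2+gqZ+q^2$, $A(g;R)=Z+\frac12 gq$, $\Phi(g;R)=\arctan\big(A/(hq)\big)$ if $q>0$, $\Phi=\pi/2$ if $q=0,Z>0$, $\Phi=-\pi/2$ if $q=0,Z<0$; $J(g;R)=e^{\frac12 G\Phi}$ and the Finsleroid metric function $K(g;R)=\sqrt{B(g;R)}\,J(g;R)$ ($K(g;0)=0$). The Finsler metric tensor is $g_{pq}(g;R)=\frac12\,\partial^2K^2/\partial R^p\partial R^q$. *)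

theory Defs
  imports "HOL-Analysis.Analysis"
begin

text \<open>Finsleroid in dimension N = 2 (r_11 = 1). Points R = (R^1, R^2) :: real \<times> real,
  Z = R^2, q(R) = |R^1|.\<close>

definition fh :: "real \<Rightarrow> real" where
  "fh g = sqrt (1 - g\<^sup>2 / 4)"

definition fG :: "real \<Rightarrow> real" where
  "fG g = g / fh g"

definition fq :: "real \<times> real \<Rightarrow> real" where
  "fq R = \<bar>fst R\<bar>"

definition fZ :: "real \<times> real \<Rightarrow> real" where
  "fZ R = snd R"

definition fB :: "real \<Rightarrow> real \<times> real \<Rightarrow> real" where
  "fB g R = (fZ R)\<^sup>2 + g * fq R * fZ R + (fq R)\<^sup>2"

definition fA :: "real \<Rightarrow> real \<times> real \<Rightarrow> real" where
  "fA g R = fZ R + g * fq R / 2"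

definition fPhi :: "real \<Rightarrow> real \<times> real \<Rightarrow> real" where
  "fPhi g R = (if fq R > 0 then arctan (fA g R / (fh g * fq R))
               else if fZ R > 0 then pi / 2 else - pi / 2)"

definition fJ :: "real \<Rightarrow> real \<times> real \<Rightarrow> real" where
  "fJ g R = exp (fG g * fPhi g R / 2)"

definition fK :: "real \<Rightarrow> real \<times> real \<Rightarrow> real" where
  "fK g R = (if R = 0 then 0 else sqrt (fB g R) * fJ g R)"

definition ebasis :: "nat \<Rightarrow> real \<times> real" where
  "ebasis p = (if p = 1 then (1, 0) else (0, 1))"

definition pdiff :: "nat \<Rightarrow> (real \<times> real \<Rightarrow> real) \<Rightarrow> real \<times> real \<Rightarrow> real" where
  "pdiff p f R = deriv (\<lambda>t. f (R + t *\<^sub>R ebasis p)) 0"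

definition gten :: "real \<Rightarrow> nat \<Rightarrow> nat \<Rightarrow> real \<times> real \<Rightarrow> real" where
  "gten g p q R = pdiff p (pdiff q (\<lambda>S. (fK g S)\<^sup>2)) R / 2"

definition comp :: "nat \<Rightarrow> real \<times> real \<Rightarrow> real" where
  "comp p v = (if p = 1 then fst v else snd v)"

definition finsler_speed :: "real \<Rightarrow> (real \<Rightarrow> real \<times> real) \<Rightarrow> real \<Rightarrow> real" where
  "finsler_speed g \<gamma> t =
     (let v = vector_derivative \<gamma> (at t within {0..1}) in
      sqrt (\<Sum>p\<in>{1,2}. \<Sum>q\<in>{1,2}. gten g p q (\<gamma> t) * comp p v * comp q v))"

definition indicatrix :: "real \<Rightarrow> (real \<times> real) set" where
  "indicatrix g = {R. fK g R = 1}"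

definition once_around :: "real \<Rightarrow> (real \<Rightarrow> real \<times> real) \<Rightarrow> bool" where
  "once_around g \<gamma> \<longleftrightarrow> simple_path \<gamma> \<and> pathfinish \<gamma> = pathstart \<gamma> \<and>
     path_image \<gamma> = indicatrix g \<and> \<gamma> C1_differentiable_on {0..1}"

end

theory Submission
  imports Defs "HOL-Real_Asymp.Real_Asymp"
begin


locale fin =
  fixes g :: real
  assumes gl: "-2 < g" and gu: "g < 2"
begin

definition "h = fh g"
definition "G = fG g"

lemma h_sq: "h\<^sup>2 = 1 - g\<^sup>2/4"
proof -
  have "g\<^sup>2 < 4" using gl gu by (smt (verit) abs_less_iff power2_less_eq_zero_iff real_sqrt_less_iff real_sqrt_abs real_sqrt_four) 
  then show ?thesis unfolding h_def fh_def by simp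
qed

lemma h_pos: "h > 0"
proof -
  have "g\<^sup>2 < 4" using gl gu by (smt (verit) abs_less_iff power2_less_eq_zero_iff real_sqrt_less_iff real_sqrt_abs real_sqrt_four) 
  then show ?thesis unfolding h_def fh_def by simp
qed

lemma Gh: "G * h = g" using h_pos unfolding G_def fG_def h_def by simp

lemma B_alt: "fB g R = (fA g R)\<^sup>2 + h\<^sup>2 * (fq R)\<^sup>2"
  unfolding fB_def fA_def h_sq by (simp add: power2_eq_square field_simps)

lemma B_pos: "R \<noteq> 0 \<Longrightarrow> fB g R > 0"
proof -
  assume R: "R \<noteq> 0"
  show ?thesis
  proof (cases "fq R = 0")
    case True
    then have "fst R = 0" unfolding fq_def by simp
    with R have "snd R \<noteq> 0" by (metis prod.collapse zero_prod_def)
    then show ?thesis using True unfolding fB_def fZ_def by simp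
  next
    case False
    then have "h\<^sup>2 * (fq R)\<^sup>2 > 0" using h_pos by simp
    then show ?thesis unfolding B_alt by (smt (verit) zero_le_power2)
  qed
qed


lemma abs_A_le: "\<bar>fA g R\<bar> \<le> sqrt (fB g R)"
  unfolding B_alt by (rule real_le_rsqrt) (simp add: power2_eq_square)

lemma A_ratio: assumes R: "R \<noteq> 0"
  shows "-1 \<le> fA g R / sqrt (fB g R) \<and> fA g R / sqrt (fB g R) \<le> 1"
proof -
  have b: "sqrt (fB g R) > 0" using B_pos[OF R] by simp
  have "- sqrt (fB g R) \<le> fA g R \<and> fA g R \<le> sqrt (fB g R)" using abs_A_le[of R] by linarith
  then show ?thesis using b by (simp add: divide_le_eq le_divide_eq)
qed

lemma Phi_arcsin: assumes R: "R \<noteq> 0" shows "fPhi g R = arcsin (fA g R / sqrt (fB g R))"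
proof (cases "fq R > 0")
  case True
  define u where "u = fA g R / (h * fq R)"
  have hq: "h * fq R > 0" using True h_pos by simp
  have "fPhi g R = arctan u" using True unfolding fPhi_def u_def h_def by simp
  moreover have "sin (arctan u) = fA g R / sqrt (fB g R)"
  proof -
    have "1 + u\<^sup>2 = fB g R / (h * fq R)\<^sup>2"
      unfolding u_def B_alt using hq True h_pos by (simp add: field_simps power2_eq_square)
    then have "sqrt (1 + u\<^sup>2) = sqrt (fB g R) / (h * fq R)"
      using hq by (simp add: real_sqrt_divide)
    then show ?thesis unfolding sin_arctan using hq B_pos[OF R] True h_pos unfolding u_def
      by (simp add: field_simps)
  qed
  moreover have "-(pi/2) \<le> arctan u" "arctan u \<le> pi/2"
    using arctan_lbound[of u] arctan_ubound[of u] by auto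
  ultimately show ?thesis using arcsin_sin by metis
next
  case False
  then have q0: "fq R = 0" unfolding fq_def by simp
  then have "fst R = 0" unfolding fq_def by simp
  with R have z: "snd R \<noteq> 0" by (metis prod.collapse zero_prod_def)
  have "fB g R = (snd R)\<^sup>2" "fA g R = snd R" using q0 unfolding fB_def fA_def fZ_def by auto
  then show ?thesis using z False unfolding fPhi_def fZ_def
    by (cases "snd R > 0") (auto simp: divide_simps)
qed

lemma Phi_range: "R \<noteq> 0 \<Longrightarrow> -(pi/2) \<le> fPhi g R \<and> fPhi g R \<le> pi/2"
proof -
  assume R: "R \<noteq> 0"
  note A_ratio[OF R]
  then show ?thesis unfolding Phi_arcsin[OF R] using arcsin_lbound arcsin_ubound by auto
qed

lemma inv_sin: assumes R: "R \<noteq> 0" shows "fA g R = sqrt (fB g R) * sin (fPhi g R)"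
proof -
  note A_ratio[OF R]
  then have "sin (fPhi g R) = fA g R / sqrt (fB g R)" unfolding Phi_arcsin[OF R]
    by (intro sin_arcsin) auto
  then show ?thesis using B_pos[OF R] by simp
qed

lemma inv_cos: assumes R: "R \<noteq> 0" shows "h * fq R = sqrt (fB g R) * cos (fPhi g R)"
proof -
  have b: "fB g R > 0" using B_pos[OF R] .
  note A_ratio[OF R]
  then have "cos (fPhi g R) = sqrt (1 - (fA g R / sqrt (fB g R))\<^sup>2)" unfolding Phi_arcsin[OF R]
    by (intro cos_arcsin) auto
  also have "1 - (fA g R / sqrt (fB g R))\<^sup>2 = (h * fq R / sqrt (fB g R))\<^sup>2"
    using b unfolding power_divide by (simp add: B_alt field_simps power2_eq_square)
  also have "sqrt \<dots> = h * fq R / sqrt (fB g R)"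
    using h_pos b by (simp add: fq_def)
  finally show ?thesis using b by simp
qed

lemma K_sq: assumes R: "R \<noteq> 0" shows "(fK g R)\<^sup>2 = fB g R * exp (G * fPhi g R)"
proof -
  have "(exp (G * fPhi g R / 2))\<^sup>2 = exp (G * fPhi g R)"
    by (simp add: power2_eq_square flip: exp_add)
  then show ?thesis using R B_pos[OF R] unfolding fK_def fJ_def G_def
    by (simp add: power_mult_distrib)
qed

lemma K_nonneg: "fK g R \<ge> 0"
  unfolding fK_def fJ_def using B_pos[of R] by (simp add: less_imp_le)

lemma indic_iff: "fK g R = 1 \<longleftrightarrow> R \<noteq> 0 \<and> sqrt (fB g R) = exp (- (G * fPhi g R / 2))"
proof
  assume K: "fK g R = 1"
  then have R: "R \<noteq> 0" unfolding fK_def by auto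
  then have "sqrt (fB g R) * exp (G * fPhi g R / 2) = 1" using K unfolding fK_def fJ_def G_def by simp
  then show "R \<noteq> 0 \<and> sqrt (fB g R) = exp (- (G * fPhi g R / 2))" using R
    by (simp add: exp_minus field_simps)
next
  assume "R \<noteq> 0 \<and> sqrt (fB g R) = exp (- (G * fPhi g R / 2))"
  then show "fK g R = 1" unfolding fK_def fJ_def G_def by (simp add: exp_minus)
qed

end

context fin begin

definition "qs s S = s * fst S"
definition "Bs s S = (snd S)\<^sup>2 + g * qs s S * snd S + (qs s S)\<^sup>2"
definition "As s S = snd S + g * qs s S / 2"
definition "Ps s S = arctan (As s S / (h * qs s S))"
definition "Es s S = exp (G * Ps s S)"
definition "ks s S = Bs s S * Es s S"
definition "dP s S v = h * (qs s S * snd v - snd S * s * fst v) / Bs s S"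

lemma Bs_alt: "Bs s S = (As s S)\<^sup>2 + h\<^sup>2 * (qs s S)\<^sup>2"
  unfolding Bs_def As_def h_sq by (simp add: power2_eq_square field_simps)

lemma Bs_pos: "qs s S > 0 \<Longrightarrow> Bs s S > 0"
  unfolding Bs_alt using h_pos by (smt (verit) mult_pos_pos zero_le_power2 zero_less_power)

lemma Ps_deriv: assumes "qs s S > 0"
  shows "(Ps s has_derivative dP s S) (at S)"
proof -
  have q: "qs s S \<noteq> 0" using assms by simp
  then have s0: "s \<noteq> 0" "fst S \<noteq> 0" unfolding qs_def by auto
  have b: "Bs s S \<noteq> 0" using Bs_pos[OF assms] by simp
  have hh: "h \<noteq> 0" using h_pos by simp
  have u: "((\<lambda>S. As s S / (h * qs s S)) has_derivative
      (\<lambda>v. h*(qs s S * snd v - snd S * s * fst v) / (h*qs s S)\<^sup>2)) (at S)"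
    unfolding As_def qs_def[abs_def]
    apply (rule has_derivative_eq_rhs)
     apply (rule derivative_intros | simp)+
    using s0 hh apply simp
    apply (rule ext)
    using s0 hh
    apply (simp add: field_simps power2_eq_square)
    done
  have e: "inverse (1 + (As s S / (h * qs s S))\<^sup>2) = (h*qs s S)\<^sup>2 / Bs s S"
    using q hh b unfolding Bs_alt by (simp add: field_simps power2_eq_square)
  show ?thesis
    unfolding Ps_def
    apply (rule has_derivative_eq_rhs[OF DERIV_arctan[THEN DERIV_compose_FDERIV, OF u]])
    apply (rule ext)
    unfolding e dP_def using q hh b by (simp add: field_simps power2_eq_square)
qed
definition "dE s S v = Es s S * (g * (qs s S * snd v - snd S * s * fst v) / Bs s S)"
definition "D1 s S = 2 * fst S * Es s S"
definition "D2 s S = 2 * (snd S + g * qs s S) * Es s S"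
definition "dD1 s S v = 2 * fst v * Es s S + 2 * fst S * dE s S v"
definition "dD2 s S v = 2 * (snd v + g * s * fst v) * Es s S + 2 * (snd S + g * qs s S) * dE s S v"

lemma Es_deriv: assumes "qs s S > 0"
  shows "(Es s has_derivative dE s S) (at S)"
proof -
  have G: "((\<lambda>S. G * Ps s S) has_derivative (\<lambda>v. G * dP s S v)) (at S)"
    by (rule has_derivative_mult_right[OF Ps_deriv[OF assms]])
  have GdP: "G * dP s S v = g * (qs s S * snd v - snd S * s * fst v) / Bs s S" for v
    unfolding dP_def using Gh by (metis mult.assoc times_divide_eq_right)
  show ?thesis unfolding Es_def[abs_def]
    apply (rule has_derivative_eq_rhs[OF DERIV_exp[THEN DERIV_compose_FDERIV, OF G]])
    apply (rule ext)
    using GdP unfolding dE_def Es_def by simp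
qed

lemma ks_deriv: assumes "qs s S > 0" and s: "s = 1 \<or> s = -1"
  shows "(ks s has_derivative (\<lambda>v. D1 s S * fst v + D2 s S * snd v)) (at S)"
proof -
  have B: "(Bs s has_derivative (\<lambda>v. 2 * snd S * snd v + g * (s * fst v * snd S + qs s S * snd v)
       + 2 * qs s S * (s * fst v))) (at S)"
    unfolding Bs_def[abs_def] qs_def
    apply (rule has_derivative_eq_rhs)
     apply (rule derivative_intros | simp)+
    apply (rule ext)
    apply (simp add: field_simps power2_eq_square)
    done
  have b: "Bs s S \<noteq> 0" using Bs_pos[OF assms(1)] by simp
  have ss: "s * s = 1" using s by auto
  show ?thesis unfolding ks_def[abs_def]
    apply (rule has_derivative_eq_rhs[OF has_derivative_mult[OF B Es_deriv[OF assms(1)]]])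
    apply (rule ext)
    unfolding dE_def D1_def D2_def qs_def using b ss
    apply (simp add: field_simps)
    done
qed

lemma D1_deriv: assumes "qs s S > 0"
  shows "(D1 s has_derivative dD1 s S) (at S)"
  unfolding D1_def[abs_def]
  apply (rule has_derivative_eq_rhs)
   apply (rule derivative_intros Es_deriv[OF assms] | simp)+
  apply (rule ext)
  unfolding dD1_def by (simp add: field_simps)

lemma D2_deriv: assumes "qs s S > 0"
  shows "(D2 s has_derivative dD2 s S) (at S)"
  unfolding D2_def[abs_def] qs_def
  apply (rule has_derivative_eq_rhs)
   apply (rule derivative_intros Es_deriv[OF assms] | simp)+
  apply (rule ext)
  unfolding dD2_def qs_def by (simp add: field_simps)

end


lemma pdiff_has_derivative:
  assumes "(f has_derivative f') (at R)"
  shows "pdiff p f R = f' (ebasis p)"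
proof -
  have l: "((\<lambda>t::real. R + t *\<^sub>R ebasis p) has_derivative (\<lambda>t. t *\<^sub>R ebasis p)) (at 0)"
    by (rule derivative_eq_intros refl | simp)+
  have f: "(f has_derivative f') (at (R + 0 *\<^sub>R ebasis p))" using assms by simp
  have "((\<lambda>t. f (R + t *\<^sub>R ebasis p)) has_derivative (\<lambda>t. f' (t *\<^sub>R ebasis p))) (at 0)"
    using has_derivative_compose[OF l f] by (simp add: o_def)
  moreover have "linear f'" using assms has_derivative_linear by blast
  then have "(\<lambda>t. f' (t *\<^sub>R ebasis p)) = (\<lambda>t. t * f' (ebasis p))"
    by (simp add: linear_scale)
  ultimately have "((\<lambda>t. f (R + t *\<^sub>R ebasis p)) has_field_derivative f' (ebasis p)) (at 0)"
    by (simp add: has_field_derivative_def mult.commute[of _ "f' (ebasis p)"])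
  then show ?thesis unfolding pdiff_def by (rule DERIV_imp_deriv)
qed

lemma pdiff_local:
  assumes "open U" "R \<in> U" "\<And>S. S \<in> U \<Longrightarrow> f S = f2 S" "(f2 has_derivative f2') (at R)"
  shows "pdiff p f R = f2' (ebasis p)"
proof -
  have "(f has_derivative f2') (at R)"
    by (rule has_derivative_transform_within_open[OF assms(4) assms(1) assms(2)]) (use assms(3) in auto)
  then show ?thesis by (rule pdiff_has_derivative)
qed

context fin begin

lemma open_U: "open {S::real\<times>real. 0 < s * fst S}"
  by (intro open_Collect_less continuous_intros)

lemma loc_eqs: assumes q: "qs s S > 0" and s: "s = 1 \<or> s = -1"
  shows "S \<noteq> 0" "fq S = qs s S" "fPhi g S = Ps s S" "(fK g S)\<^sup>2 = ks s S"
proof -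
  show S: "S \<noteq> 0" using q unfolding qs_def by auto
  show fq: "fq S = qs s S" using q s unfolding fq_def qs_def by auto
  then show Ph: "fPhi g S = Ps s S" using q unfolding fPhi_def Ps_def fA_def As_def fZ_def h_def
    by simp
  have "fB g S = Bs s S" unfolding fB_def Bs_def fq fZ_def ..
  then show "(fK g S)\<^sup>2 = ks s S" unfolding K_sq[OF S] ks_def Es_def Ph by simp
qed

lemma pdiffK: assumes q: "qs s S > 0" and s: "s = 1 \<or> s = -1"
  shows "pdiff 1 (\<lambda>S. (fK g S)\<^sup>2) S = D1 s S" "pdiff 2 (\<lambda>S. (fK g S)\<^sup>2) S = D2 s S"
proof -
  have "pdiff p (\<lambda>S. (fK g S)\<^sup>2) S = (\<lambda>v. D1 s S * fst v + D2 s S * snd v) (ebasis p)" for p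
    apply (rule pdiff_local[OF open_U[of s], of S _ "ks s"])
    using q apply (simp add: qs_def)
     apply (rule loc_eqs(4)) using s apply (auto simp: qs_def)[2]
    by (rule ks_deriv[OF q s])
  then show "pdiff 1 (\<lambda>S. (fK g S)\<^sup>2) S = D1 s S" "pdiff 2 (\<lambda>S. (fK g S)\<^sup>2) S = D2 s S"
    by (auto simp: ebasis_def)
qed

lemma gten_vals: assumes q: "qs s R > 0" and s: "s = 1 \<or> s = -1"
  shows "gten g 1 1 R = dD1 s R (1,0) / 2" "gten g 2 1 R = dD1 s R (0,1) / 2"
        "gten g 1 2 R = dD2 s R (1,0) / 2" "gten g 2 2 R = dD2 s R (0,1) / 2"
proof -
  have U: "open {S::real\<times>real. 0 < s * fst S}" "R \<in> {S::real\<times>real. 0 < s * fst S}"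
    using open_U q by (auto simp: qs_def)
  have e1: "pdiff p (pdiff 1 (\<lambda>S. (fK g S)\<^sup>2)) R = dD1 s R (ebasis p)" for p
    apply (rule pdiff_local[OF U, of _ "D1 s"])
     apply (rule pdiffK(1)) using s apply (auto simp: qs_def)[2]
    by (rule D1_deriv[OF q])
  have e2: "pdiff p (pdiff 2 (\<lambda>S. (fK g S)\<^sup>2)) R = dD2 s R (ebasis p)" for p
    apply (rule pdiff_local[OF U, of _ "D2 s"])
     apply (rule pdiffK(2)) using s apply (auto simp: qs_def)[2]
    by (rule D2_deriv[OF q])
  show "gten g 1 1 R = dD1 s R (1,0) / 2" "gten g 2 1 R = dD1 s R (0,1) / 2"
        "gten g 1 2 R = dD2 s R (1,0) / 2" "gten g 2 2 R = dD2 s R (0,1) / 2"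
    unfolding gten_def e1 e2 by (auto simp: ebasis_def)
qed

lemma quad_form: assumes q: "qs s R > 0" and s: "s = 1 \<or> s = -1"
  shows "(\<Sum>p\<in>{1,2}. \<Sum>k\<in>{1,2}. gten g p k R * comp p v * comp k v) =
    Es s R / Bs s R * ((fst R * fst v + (snd R + g * qs s R) * snd v)\<^sup>2
                      + (qs s R * snd v - snd R * s * fst v)\<^sup>2)"
proof -
  have b: "Bs s R \<noteq> 0" using Bs_pos[OF q] by simp
  have "(\<Sum>p\<in>{1,2}. \<Sum>k\<in>{1,2}. gten g p k R * comp p v * comp k v) =
     gten g 1 1 R * fst v * fst v + gten g 1 2 R * fst v * snd v + gten g 2 1 R * snd v * fst v
     + gten g 2 2 R * snd v * snd v"
    by (simp add: comp_def)
  also have "\<dots> = Es s R / Bs s R * ((fst R * fst v + (snd R + g * qs s R) * snd v)\<^sup>2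
                      + (qs s R * snd v - snd R * s * fst v)\<^sup>2)"
  proof -
    define w where "w = 1 / Bs s R"
    have dv: "a / Bs s R = a * w" for a unfolding w_def by simp
    have wB: "w * ((snd R)\<^sup>2 + g * (s * fst R) * snd R + (s * fst R)\<^sup>2) = 1"
      using b unfolding w_def Bs_def qs_def by simp
    have ss: "s * s = 1" using s by auto
    show ?thesis
      unfolding gten_vals[OF q s] dD1_def dD2_def dE_def dv
      unfolding qs_def fst_conv snd_conv using wB ss by algebra
  qed
  finally show ?thesis .
qed

end


lemma chain_scalar:
  assumes "(\<gamma> has_vector_derivative v) (at t)" "(f has_derivative f') (at (\<gamma> t))"
  shows "((\<lambda>\<tau>. f (\<gamma> \<tau>)) has_real_derivative f' v) (at t)"
proof -
  have "((\<lambda>x. f (\<gamma> x)) has_derivative (\<lambda>x. f' (x *\<^sub>R v))) (at t)"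
    using has_derivative_compose[OF assms(1)[unfolded has_vector_derivative_def] assms(2)] .
  moreover have "linear f'" using assms(2) has_derivative_linear by blast
  then have "(\<lambda>x. f' (x *\<^sub>R v)) = (*) (f' v)"
    by (auto simp: linear_scale o_def)
  ultimately show ?thesis by (simp add: has_field_derivative_def o_def)
qed

lemma deriv_const_zero:
  assumes "(F has_real_derivative d) (at t)" "open T" "t \<in> T" "\<And>x. x \<in> T \<Longrightarrow> F x = c"
  shows "d = 0"
proof -
  have "((\<lambda>_. c) has_real_derivative d) (at t)"
    by (rule has_field_derivative_transform_within_open[OF assms(1-3)]) (use assms(4) in auto)
  then show ?thesis using DERIV_const DERIV_unique by blast
qed

context fin begin

lemma speed_formula:
  assumes vd: "(\<gamma> has_vector_derivative v) (at t)" and T: "open T" "t \<in> T"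
    and K1: "\<And>x. x \<in> T \<Longrightarrow> fK g (\<gamma> x) = 1" and x0: "fst (\<gamma> t) \<noteq> 0"
  shows "\<exists>d. ((\<lambda>\<tau>. fPhi g (\<gamma> \<tau>)) has_real_derivative d) (at t) \<and>
     sqrt (\<Sum>p\<in>{1,2}. \<Sum>k\<in>{1,2}. gten g p k (\<gamma> t) * comp p v * comp k v) = \<bar>d\<bar> / h"
proof -
  define R where "R = \<gamma> t"
  define s :: real where "s = (if fst R > 0 then 1 else -1)"
  have s: "s = 1 \<or> s = -1" unfolding s_def by auto
  have q: "qs s R > 0" using x0 unfolding s_def qs_def R_def by auto
  have U: "open {S::real\<times>real. 0 < s * fst S}" "R \<in> {S::real\<times>real. 0 < s * fst S}"
    using open_U q by (auto simp: qs_def)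
  have Phd: "(fPhi g has_derivative dP s R) (at R)"
    apply (rule has_derivative_transform_within_open[OF Ps_deriv[OF q] U])
    using loc_eqs(3)[OF _ s] by (auto simp: qs_def)
  have Kd: "((\<lambda>S. (fK g S)\<^sup>2) has_derivative (\<lambda>v. D1 s R * fst v + D2 s R * snd v)) (at R)"
    apply (rule has_derivative_transform_within_open[OF ks_deriv[OF q s] U])
    using loc_eqs(4)[OF _ s] by (auto simp: qs_def)
  have d1: "((\<lambda>\<tau>. fPhi g (\<gamma> \<tau>)) has_real_derivative dP s R v) (at t)"
    using chain_scalar[OF vd Phd[unfolded R_def]] unfolding R_def .
  have "((\<lambda>\<tau>. (fK g (\<gamma> \<tau>))\<^sup>2) has_real_derivative D1 s R * fst v + D2 s R * snd v) (at t)"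
    using chain_scalar[OF vd Kd[unfolded R_def]] unfolding R_def by simp
  then have z: "D1 s R * fst v + D2 s R * snd v = 0"
    by (rule deriv_const_zero[OF _ T, where c=1]) (use K1 in simp)
  have Epos: "Es s R > 0" unfolding Es_def by simp
  have "2 * Es s R * (fst R * fst v + (snd R + g * qs s R) * snd v) = 0"
    using z unfolding D1_def D2_def by (simp add: algebra_simps)
  then have first0: "fst R * fst v + (snd R + g * qs s R) * snd v = 0"
    using Epos by simp
  have b: "Bs s R > 0" using Bs_pos[OF q] .
  have "ks s R = 1" using loc_eqs(4)[OF q s] K1[OF T(2)] unfolding R_def by simp
  then have E: "Es s R = 1 / Bs s R" using b unfolding ks_def by (simp add: field_simps)
  have "(\<Sum>p\<in>{1,2}. \<Sum>k\<in>{1,2}. gten g p k R * comp p v * comp k v)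
      = ((qs s R * snd v - snd R * s * fst v) / Bs s R)\<^sup>2"
    unfolding quad_form[OF q s] first0 E by (simp add: power2_eq_square)
  then have "sqrt (\<Sum>p\<in>{1,2}. \<Sum>k\<in>{1,2}. gten g p k R * comp p v * comp k v)
      = \<bar>dP s R v\<bar> / h"
    unfolding dP_def using h_pos by (simp add: abs_mult abs_div)
  then show ?thesis using d1 unfolding R_def by blast
qed

end


lemma mono_of_inj:
  fixes \<phi> :: "real \<Rightarrow> real"
  assumes c: "continuous_on {a..b} \<phi>" and i: "inj_on \<phi> {a..b}" and ab: "\<phi> a < \<phi> b"
    and xy: "a \<le> x" "x < y" "y \<le> b"
  shows "\<phi> x < \<phi> y"
proof -
  have ab': "a < b" using xy by simp
  have mid: "\<phi> a < \<phi> z \<and> \<phi> z < \<phi> b" if "a < z" "z < b" for z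
    using continuous_inj_imp_mono[OF that c i] ab by auto
  show ?thesis
  proof (cases "x = a")
    case True
    then show ?thesis using mid[of y] ab xy by (cases "y = b") auto
  next
    case False
    then have xa: "a < x" using xy by simp
    show ?thesis
    proof (cases "y = b")
      case True then show ?thesis using mid[of x] xa xy by auto
    next
      case False
      then have yb: "y < b" using xy by simp
      have c2: "continuous_on {a..y} \<phi>" using c by (rule continuous_on_subset) (use yb in auto)
      have i2: "inj_on \<phi> {a..y}" using i by (rule inj_on_subset) (use yb in auto)
      have "(\<phi> a < \<phi> x \<and> \<phi> x < \<phi> y) \<or> (\<phi> y < \<phi> x \<and> \<phi> x < \<phi> a)"
        by (rule continuous_inj_imp_mono[OF xa xy(2) c2 i2])
      then show ?thesis using mid[of y] xy yb xa by auto
    qed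
  qed
qed

lemma arc_inc:
  fixes \<phi> :: "real \<Rightarrow> real"
  assumes ab: "a < b" and c: "continuous_on {a..b} \<phi>" and i: "inj_on \<phi> {a..b}"
    and inc: "\<phi> a < \<phi> b"
    and d: "\<And>t. t \<in> {a<..<b} \<Longrightarrow> (\<phi> has_real_derivative \<phi>' t) (at t)"
    and sp: "\<And>t. t \<in> {a<..<b} \<Longrightarrow> sp t = \<bar>\<phi>' t\<bar> / h"
  shows "(sp has_integral \<bar>\<phi> b - \<phi> a\<bar> / h) {a..b}"
proof -
  have nn: "\<phi>' t \<ge> 0" if t: "t \<in> {a<..<b}" for t
  proof (rule ccontr)
    assume "\<not> \<phi>' t \<ge> 0"
    then obtain e where e: "e > 0" "\<And>k. k > 0 \<Longrightarrow> k < e \<Longrightarrow> \<phi> t > \<phi> (t + k)"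
      using DERIV_neg_dec_right[OF d[OF t]] by force
    define k where "k = min e (b - t) / 2"
    have k: "k > 0" "k < e" "t + k < b" using e t unfolding k_def by (auto simp: min_def field_simps)
    have "\<phi> t < \<phi> (t + k)"
      by (rule mono_of_inj[OF c i inc]) (use t k in auto)
    then show False using e(2)[OF k(1,2)] by simp
  qed
  have "((\<lambda>t. \<phi>' t) has_integral (\<phi> b - \<phi> a)) {a..b}"
    by (rule fundamental_theorem_of_calculus_interior[OF _ c])
       (use ab d in \<open>auto simp: has_real_derivative_iff_has_vector_derivative\<close>)
  then have I: "((\<lambda>t. \<phi>' t / h) has_integral ((\<phi> b - \<phi> a) / h)) {a..b}"
    using has_integral_mult_left[of _ _ _ "1/h"] by simp
  have "(sp has_integral ((\<phi> b - \<phi> a) / h)) {a..b}"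
    apply (rule has_integral_spike_finite[OF _ _ I, of "{a,b}"])
    using sp nn by auto
  then show ?thesis using inc by simp
qed

lemma arc_gen:
  fixes \<phi> :: "real \<Rightarrow> real"
  assumes ab: "a \<le> b" and c: "continuous_on {a..b} \<phi>" and i: "inj_on \<phi> {a..b}"
    and d: "\<And>t. t \<in> {a<..<b} \<Longrightarrow> (\<phi> has_real_derivative \<phi>' t) (at t)"
    and sp: "\<And>t. t \<in> {a<..<b} \<Longrightarrow> sp t = \<bar>\<phi>' t\<bar> / h"
  shows "(sp has_integral \<bar>\<phi> b - \<phi> a\<bar> / h) {a..b}"
proof (cases "a = b")
  case True then show ?thesis by (simp add: has_integral_refl(2))
next
  case False
  then have ab': "a < b" using ab by simp
  then have ne: "\<phi> a \<noteq> \<phi> b" using i by (auto dest: inj_onD)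
  show ?thesis
  proof (cases "\<phi> a < \<phi> b")
    case True then show ?thesis using arc_inc[OF ab' c i True d sp] by simp
  next
    case False
    then have inc: "- \<phi> a < - \<phi> b" using ne by simp
    have c': "continuous_on {a..b} (\<lambda>t. - \<phi> t)" using c by (intro continuous_intros)
    have i': "inj_on (\<lambda>t. - \<phi> t) {a..b}" using i by (auto simp: inj_on_def)
    have "(sp has_integral \<bar>- \<phi> b - - \<phi> a\<bar> / h) {a..b}"
      by (rule arc_inc[OF ab' c' i' inc, of "\<lambda>t. - \<phi>' t"]) (use d sp in \<open>auto intro: derivative_intros\<close>)
    then show ?thesis by (simp add: abs_minus_commute)
  qed
qed


context fin begin

lemma Phi_cont: "continuous_on (-{0}) (fPhi g)"
proof -
  have cA: "continuous_on (-{0}) (\<lambda>S. fA g S)"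
    unfolding fA_def fq_def fZ_def by (intro continuous_intros) auto
  have cB: "continuous_on (-{0}) (\<lambda>S. fB g S)"
    unfolding fB_def fq_def fZ_def by (intro continuous_intros)
  have "continuous_on (-{0}) (\<lambda>S. arcsin (fA g S / sqrt (fB g S)))"
    apply (intro continuous_intros cA cB)
    using B_pos A_ratio by force+
  then show ?thesis by (rule continuous_on_cong[THEN iffD1, rotated 2]) (auto simp: Phi_arcsin)
qed

lemma Phi_inj:
  assumes K: "fK g R = 1" "fK g R' = 1" and P: "fPhi g R = fPhi g R'"
    and s: "\<sigma> = 1 \<or> \<sigma> = -1" "\<sigma> * fst R \<ge> 0" "\<sigma> * fst R' \<ge> 0"
  shows "R = R'"
proof -
  have R: "R \<noteq> 0" "sqrt (fB g R) = exp (- (G * fPhi g R / 2))" using K(1) indic_iff by auto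
  have R': "R' \<noteq> 0" "sqrt (fB g R') = exp (- (G * fPhi g R' / 2))" using K(2) indic_iff by auto
  have "h * fq R = h * fq R'" using inv_cos[OF R(1)] inv_cos[OF R'(1)] R R' P by simp
  then have q: "\<bar>fst R\<bar> = \<bar>fst R'\<bar>" using h_pos unfolding fq_def by simp
  then have f: "fst R = fst R'" using s by (auto simp: abs_if split: if_splits)
  have "fA g R = fA g R'" using inv_sin[OF R(1)] inv_sin[OF R'(1)] R R' P by simp
  then have "snd R = snd R'" using q unfolding fA_def fZ_def fq_def by simp
  then show ?thesis using f by (simp add: prod_eq_iff)
qed

definition "PN = (0::real, exp (- (G * pi / 4)))"
definition "PS = (0::real, - exp (G * pi / 4))"

lemma PN: "fK g PN = 1" "fPhi g PN = pi/2"
proof -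
  show P: "fPhi g PN = pi/2" unfolding fPhi_def PN_def fq_def fZ_def by simp
  have "fB g PN = (exp (- (G * pi / 4)))\<^sup>2" unfolding PN_def fB_def fq_def fZ_def by simp
  then have "sqrt (fB g PN) = exp (- (G * pi / 4))" by simp
  then show "fK g PN = 1" unfolding indic_iff P by (simp add: PN_def zero_prod_def)
qed

lemma PS: "fK g PS = 1" "fPhi g PS = - (pi/2)"
proof -
  show P: "fPhi g PS = - (pi/2)" unfolding fPhi_def PS_def fq_def fZ_def by simp
  have "fB g PS = (exp (G * pi / 4))\<^sup>2" unfolding PS_def fB_def fq_def fZ_def by simp
  then have "sqrt (fB g PS) = exp (G * pi / 4)" by simp
  then show "fK g PS = 1" unfolding indic_iff P by (simp add: PS_def zero_prod_def)
qed

lemma PN_PS: "PN \<noteq> PS" unfolding PN_def PS_def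
  by (simp add: prod_eq_iff) (smt (verit) exp_gt_zero)

lemma axis: assumes K: "fK g R = 1" and f: "fst R = 0" shows "R = PN \<or> R = PS"
proof -
  have R: "R \<noteq> 0" "sqrt (fB g R) = exp (- (G * fPhi g R / 2))" using K indic_iff by auto
  then have z: "snd R \<noteq> 0" using f by (metis prod.collapse zero_prod_def)
  have B: "fB g R = (snd R)\<^sup>2" using f unfolding fB_def fq_def fZ_def by simp
  show ?thesis
  proof (cases "snd R > 0")
    case True
    then have "fPhi g R = pi/2" using f unfolding fPhi_def fq_def fZ_def by simp
    then have "snd R = exp (- (G * pi / 4))" using R(2) B True by simp
    then show ?thesis using f unfolding PN_def by (simp add: prod_eq_iff)
  next
    case False
    then have "fPhi g R = -(pi/2)" using f z unfolding fPhi_def fq_def fZ_def by simp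
    then have "- snd R = exp (G * pi / 4)" using R(2) B False by simp
    then show ?thesis using f unfolding PS_def by (simp add: prod_eq_iff)
  qed
qed

end

context fin begin

lemma sign_const:
  fixes f :: "real \<Rightarrow> real"
  assumes ab: "a < b" and c: "continuous_on {a..b} f" and nz: "\<And>t. t \<in> {a<..<b} \<Longrightarrow> f t \<noteq> 0"
  shows "\<exists>\<sigma>. (\<sigma> = 1 \<or> \<sigma> = -1) \<and> (\<forall>t\<in>{a..b}. \<sigma> * f t \<ge> 0)"
proof -
  define m where "m = (a + b) / 2"
  have m: "m \<in> {a<..<b}" using ab unfolding m_def by auto
  define \<sigma> :: real where "\<sigma> = (if f m > 0 then 1 else -1)"
  have s: "\<sigma> = 1 \<or> \<sigma> = -1" unfolding \<sigma>_def by auto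
  have fm: "\<sigma> * f m > 0" using nz[OF m] unfolding \<sigma>_def by auto
  have cs: "continuous_on {a..b} (\<lambda>t. \<sigma> * f t)" using c by (intro continuous_intros)
  have "\<sigma> * f t \<ge> 0" if t: "t \<in> {a..b}" for t
  proof (rule ccontr)
    assume neg: "\<not> \<sigma> * f t \<ge> 0"
    show False
    proof (cases "t < m")
      case True
      have "continuous_on {t..m} (\<lambda>t. \<sigma> * f t)" using cs by (rule continuous_on_subset) (use t m in auto)
      then obtain x where x: "t \<le> x" "x \<le> m" "\<sigma> * f x = 0"
        using IVT'[of "\<lambda>t. \<sigma> * f t" t 0 m] neg fm True by auto
      have "x \<noteq> t" "x \<noteq> m" using x neg fm by auto
      then have "x \<in> {a<..<b}" using x t m by auto
      then show False using nz x s by auto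
    next
      case False
      then have mt: "m < t" using neg fm by (cases "t = m") auto
      have "continuous_on {m..t} (\<lambda>t. \<sigma> * f t)" using cs by (rule continuous_on_subset) (use t m in auto)
      then obtain x where x: "m \<le> x" "x \<le> t" "\<sigma> * f x = 0"
        using IVT2'[of "\<lambda>t. \<sigma> * f t" t 0 m] neg fm mt by auto
      have "x \<noteq> t" "x \<noteq> m" using x neg fm by auto
      then have "x \<in> {a<..<b}" using x t m by auto
      then show False using nz x s by auto
    qed
  qed
  then show ?thesis using s by blast
qed

lemma integral_all:
  assumes oa: "once_around g \<gamma>"
  shows "(finsler_speed g \<gamma> has_integral (2 * pi / h)) {0..1}"
proof -
  obtain D where D: "\<And>t. t \<in> {0..1} \<Longrightarrow> (\<gamma> has_vector_derivative D t) (at t)"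
    using oa unfolding once_around_def C1_differentiable_on_def by blast
  have pc: "continuous_on {0..1} \<gamma>" using oa unfolding once_around_def simple_path_def path_def by simp
  have lf: "loop_free \<gamma>" using oa unfolding once_around_def simple_path_def by simp
  have img: "\<gamma> ` {0..1} = indicatrix g" using oa unfolding once_around_def path_image_def by simp
  have cl: "\<gamma> 1 = \<gamma> 0" using oa unfolding once_around_def pathfinish_def pathstart_def by simp
  have K1: "fK g (\<gamma> t) = 1" if "t \<in> {0..1}" for t using img that unfolding indicatrix_def by auto
  have nz: "\<gamma> t \<noteq> 0" if "t \<in> {0..1}" for t using K1[OF that] indic_iff by auto
  define \<phi> where "\<phi> t = fPhi g (\<gamma> t)" for t
  have \<phi>c: "continuous_on {0..1} \<phi>"
    unfolding \<phi>_def
    by (rule continuous_on_compose2[OF Phi_cont pc]) (use nz in auto)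
  have sp: "(\<phi> has_real_derivative deriv \<phi> t) (at t) \<and> finsler_speed g \<gamma> t = \<bar>deriv \<phi> t\<bar> / h"
    if t: "t \<in> {0<..<1}" "fst (\<gamma> t) \<noteq> 0" for t
  proof -
    have t01: "t \<in> {0..1}" using t by auto
    have T: "\<And>x. x \<in> {0<..<1} \<Longrightarrow> fK g (\<gamma> x) = 1" using K1 by auto
    obtain d where d: "(\<phi> has_real_derivative d) (at t)"
      "sqrt (\<Sum>p\<in>{1,2}. \<Sum>k\<in>{1,2}. gten g p k (\<gamma> t) * comp p (D t) * comp k (D t)) = \<bar>d\<bar> / h"
      using speed_formula[OF D[OF t01] open_greaterThanLessThan t(1) T t(2)] unfolding \<phi>_def
      by blast
    have "vector_derivative \<gamma> (at t within {0..1}) = D t"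
      using vector_derivative_within_cbox[of 0 1 t \<gamma> "D t"] has_vector_derivative_at_within[OF D[OF t01]] t01
      by simp
    then have "finsler_speed g \<gamma> t = \<bar>d\<bar> / h" unfolding finsler_speed_def Let_def using d(2) by simp
    moreover have "deriv \<phi> t = d" using d(1) by (rule DERIV_imp_deriv)
    ultimately show ?thesis using d(1) by simp
  qed
  have arc: "(finsler_speed g \<gamma> has_integral \<bar>\<phi> b - \<phi> a\<bar> / h) {a..b}"
    if ab: "0 \<le> a" "a \<le> b" "b \<le> 1" and ax: "\<And>t. t \<in> {a<..<b} \<Longrightarrow> fst (\<gamma> t) \<noteq> 0"
      and inj: "inj_on \<gamma> {a..b}" for a b
  proof (cases "a = b")
    case True then show ?thesis by (simp add: has_integral_refl(2))
  next
    case False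
    then have ab': "a < b" using ab by simp
    have sub: "{a..b} \<subseteq> {0..1}" using ab by auto
    have cf: "continuous_on {a..b} (\<lambda>t. fst (\<gamma> t))"
      using pc sub by (intro continuous_intros) (rule continuous_on_subset)
    obtain \<sigma> where \<sigma>: "\<sigma> = 1 \<or> \<sigma> = -1" "\<And>t. t \<in> {a..b} \<Longrightarrow> \<sigma> * fst (\<gamma> t) \<ge> 0"
      using sign_const[OF ab' cf ax] by blast
    have i\<phi>: "inj_on \<phi> {a..b}"
    proof (rule inj_onI)
      fix x y assume xy: "x \<in> {a..b}" "y \<in> {a..b}" "\<phi> x = \<phi> y"
      have "\<gamma> x = \<gamma> y"
        by (rule Phi_inj[OF K1 K1 _ \<sigma>(1) \<sigma>(2) \<sigma>(2)]) (use xy sub \<phi>_def in auto)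
      then show "x = y" using inj xy by (auto dest: inj_onD)
    qed
    show ?thesis
      apply (rule arc_gen[OF ab(2) continuous_on_subset[OF \<phi>c sub] i\<phi>, of "deriv \<phi>"])
      using sp ax ab by auto
  qed
  have lf': "x = y \<or> x = 0 \<and> y = 1 \<or> x = 1 \<and> y = 0" if "x \<in> {0..1}" "y \<in> {0..1}" "\<gamma> x = \<gamma> y" for x y
    using lf that unfolding loop_free_def by blast
  have ex: "\<exists>t. 0 \<le> t \<and> t < 1 \<and> \<gamma> t = P" if P1: "fK g P = 1" for P
  proof -
    have "P \<in> \<gamma> ` {0..1}" using img P1 unfolding indicatrix_def by auto
    then obtain t where t: "t \<in> {0..1}" "\<gamma> t = P" by auto
    show ?thesis
    proof (cases "t = 1")
      case True then show ?thesis using t cl by (intro exI[of _ 0]) auto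
    next
      case False then show ?thesis using t by (intro exI[of _ t]) auto
    qed
  qed
  have injs: "inj_on \<gamma> {a..b}" if "0 \<le> a" "b \<le> 1" "0 < a \<or> b < 1" for a b
  proof (rule inj_onI)
    fix x y assume xy: "x \<in> {a..b}" "y \<in> {a..b}" "\<gamma> x = \<gamma> y"
    then have "x = y \<or> x = 0 \<and> y = 1 \<or> x = 1 \<and> y = 0" using lf'[of x y] that by auto
    then show "x = y" using xy that by auto
  qed
  obtain tN where tN: "0 \<le> tN" "tN < 1" "\<gamma> tN = PN" using ex[OF PN(1)] by blast
  obtain tS where tS: "0 \<le> tS" "tS < 1" "\<gamma> tS = PS" using ex[OF PS(1)] by blast
  have axt: "t = tN \<or> t = tS \<or> t = 1" if "t \<in> {0..1}" "fst (\<gamma> t) = 0" for t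
  proof -
    have "\<gamma> t = PN \<or> \<gamma> t = PS" using axis[OF K1[OF that(1)] that(2)] .
    then show ?thesis using lf'[of t tN] lf'[of t tS] tN tS that(1) by auto
  qed
  have nNS: "tN \<noteq> tS" using tN tS PN_PS by auto
  define t1 where "t1 = min tN tS"
  define t2 where "t2 = max tN tS"
  have t12: "0 \<le> t1" "t1 < t2" "t2 < 1" using tN tS nNS unfolding t1_def t2_def by auto
  have vals: "\<bar>\<phi> t2 - \<phi> t1\<bar> = pi" "\<bar>\<phi> t1 - \<phi> 0\<bar> + \<bar>\<phi> 1 - \<phi> t2\<bar> = pi"
  proof -
    have r: "-(pi/2) \<le> \<phi> 0" "\<phi> 0 \<le> pi/2" using Phi_range[OF nz[of 0]] unfolding \<phi>_def by auto
    have e: "\<phi> 1 = \<phi> 0" unfolding \<phi>_def cl ..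
    have "(\<phi> t1 = pi/2 \<and> \<phi> t2 = -(pi/2)) \<or> (\<phi> t1 = -(pi/2) \<and> \<phi> t2 = pi/2)"
      unfolding t1_def t2_def \<phi>_def using tN tS PN(2) PS(2) by (auto simp: min_def max_def)
    then show "\<bar>\<phi> t2 - \<phi> t1\<bar> = pi" "\<bar>\<phi> t1 - \<phi> 0\<bar> + \<bar>\<phi> 1 - \<phi> t2\<bar> = pi"
      using r e by auto
  qed
  have i1: "(finsler_speed g \<gamma> has_integral \<bar>\<phi> t1 - \<phi> 0\<bar> / h) {0..t1}"
  proof (rule arc)
    show "fst (\<gamma> t) \<noteq> 0" if "t \<in> {0<..<t1}" for t
      using axt[of t] that t12 unfolding t1_def t2_def by (force simp: min_def max_def split: if_splits)
    show "inj_on \<gamma> {0..t1}" using t12 by (intro injs) auto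
  qed (use t12 in auto)
  have i2: "(finsler_speed g \<gamma> has_integral \<bar>\<phi> t2 - \<phi> t1\<bar> / h) {t1..t2}"
  proof (rule arc)
    show "fst (\<gamma> t) \<noteq> 0" if "t \<in> {t1<..<t2}" for t
      using axt[of t] that t12 unfolding t1_def t2_def by (force simp: min_def max_def split: if_splits)
    show "inj_on \<gamma> {t1..t2}" using t12 by (intro injs) auto
  qed (use t12 in auto)
  have i3: "(finsler_speed g \<gamma> has_integral \<bar>\<phi> 1 - \<phi> t2\<bar> / h) {t2..1}"
  proof (rule arc)
    show "fst (\<gamma> t) \<noteq> 0" if "t \<in> {t2<..<1}" for t
      using axt[of t] that t12 unfolding t1_def t2_def by (force simp: min_def max_def split: if_splits)
    show "inj_on \<gamma> {t2..1}" using t12 by (intro injs) auto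
  qed (use t12 in auto)
  have "(finsler_speed g \<gamma> has_integral (\<bar>\<phi> t1 - \<phi> 0\<bar> / h + \<bar>\<phi> t2 - \<phi> t1\<bar> / h + \<bar>\<phi> 1 - \<phi> t2\<bar> / h)) {0..1}"
    using has_integral_combine[OF _ _ has_integral_combine[OF _ _ i1 i2] i3] t12 by auto
  also have "\<bar>\<phi> t1 - \<phi> 0\<bar> / h + \<bar>\<phi> t2 - \<phi> t1\<bar> / h + \<bar>\<phi> 1 - \<phi> t2\<bar> / h = 2 * pi / h"
    using vals by (simp add: add_divide_distrib[symmetric])
  finally show ?thesis .
qed

end


lemma glue_at:
  fixes f :: "real \<Rightarrow> 'a::real_normed_vector"
  assumes l: "(f has_vector_derivative d) (at c within {..c})"
      and r: "(f has_vector_derivative d) (at c within {c..})"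
  shows "(f has_vector_derivative d) (at c)"
proof -
  have u: "{..c} \<union> {c..} = (UNIV :: real set)" by auto
  from l r show ?thesis
    unfolding has_vector_derivative_def has_derivative_within
    using Lim_within_Un[of _ 0 c "{..c}" "{c..}"] u by auto
qed

lemma piece_deriv:
  fixes f1 f2 :: "real \<Rightarrow> 'a::real_normed_vector"
  assumes d1: "\<And>t. (f1 has_vector_derivative d1 t) (at t)"
      and d2: "\<And>t. (f2 has_vector_derivative d2 t) (at t)"
      and e: "f1 c = f2 c" "d1 c = d2 c"
  shows "((\<lambda>t. if t \<le> c then f1 t else f2 t) has_vector_derivative (if t \<le> c then d1 t else d2 t)) (at t)"
proof -
  consider "t < c" | "t = c" | "t > c" by linarith
  then show ?thesis
  proof cases
    case 1
    have "((\<lambda>t. if t \<le> c then f1 t else f2 t) has_vector_derivative d1 t) (at t)"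
      by (rule has_vector_derivative_transform_within_open[OF d1, of "{..<c}"]) (use 1 in auto)
    then show ?thesis using 1 by simp
  next
    case 3
    have "((\<lambda>t. if t \<le> c then f1 t else f2 t) has_vector_derivative d2 t) (at t)"
      by (rule has_vector_derivative_transform_within_open[OF d2, of "{c<..}"]) (use 3 in auto)
    then show ?thesis using 3 by simp
  next
    case 2
    have "(f1 has_vector_derivative d1 c) (at c within {..c})" using d1 has_vector_derivative_at_within by blast
    then have l: "((\<lambda>t. if t \<le> c then f1 t else f2 t) has_vector_derivative d1 c) (at c within {..c})"
      by (rule has_vector_derivative_transform_within[where d=1]) auto
    have "(f2 has_vector_derivative d1 c) (at c within {c..})" using d2 e has_vector_derivative_at_within by metis
    then have r: "((\<lambda>t. if t \<le> c then f1 t else f2 t) has_vector_derivative d1 c) (at c within {c..})"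
      by (rule has_vector_derivative_transform_within[where d=1]) (use e in auto)
    show ?thesis using glue_at[OF l r] 2 by simp
  qed
qed

lemma piece_cont:
  fixes f1 f2 :: "real \<Rightarrow> 'a::real_normed_vector"
  assumes "continuous_on UNIV f1" "continuous_on UNIV f2" "f1 c = f2 c"
  shows "continuous_on UNIV (\<lambda>t. if t \<le> c then f1 t else f2 t)"
proof (rule continuous_on_cases_le[where h="\<lambda>t. t"])
  show "continuous_on {x \<in> UNIV. x \<le> c} f1" using assms(1) by (rule continuous_on_subset) auto
  show "continuous_on {x \<in> UNIV. c \<le> x} f2" using assms(2) by (rule continuous_on_subset) auto
  show "continuous_on UNIV (\<lambda>t::real. t)" by (rule continuous_on_id)
qed (use assms in auto)

context fin begin

definition "rho \<phi> = exp (- (G * \<phi> / 2))"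
definition "Pq \<phi> = rho \<phi> * cos \<phi> / h"
definition "Pz \<phi> = rho \<phi> * (sin \<phi> - g * cos \<phi> / (2*h))"
definition "Rt \<phi> = (Pq \<phi>, Pz \<phi>)"
definition "Lt \<phi> = (- Pq \<phi>, Pz \<phi>)"
definition "dPq \<phi> = rho \<phi> * (-(G/2) * cos \<phi> - sin \<phi>) / h"
definition "dPz \<phi> = rho \<phi> * (-(G/2) * (sin \<phi> - g * cos \<phi> / (2*h)) + cos \<phi> + g * sin \<phi> / (2*h))"

lemma Pq_deriv: "(Pq has_real_derivative dPq \<phi>) (at \<phi>)"
  unfolding Pq_def[abs_def] rho_def
  apply (rule DERIV_cong)
   apply (rule derivative_intros | simp)+
  using h_pos unfolding dPq_def rho_def by (auto simp: field_simps)

lemma Pz_deriv: "(Pz has_real_derivative dPz \<phi>) (at \<phi>)"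
  unfolding Pz_def[abs_def] rho_def
  apply (rule DERIV_cong)
   apply (rule derivative_intros | simp)+
  using h_pos unfolding dPz_def rho_def by (auto simp: field_simps)

lemma Rt_vd: "(Rt has_vector_derivative (dPq \<phi>, dPz \<phi>)) (at \<phi>)"
  unfolding Rt_def[abs_def]
  by (intro has_vector_derivative_Pair Pq_deriv[unfolded has_real_derivative_iff_has_vector_derivative]
        Pz_deriv[unfolded has_real_derivative_iff_has_vector_derivative])

lemma Lt_vd: "(Lt has_vector_derivative (- dPq \<phi>, dPz \<phi>)) (at \<phi>)"
  unfolding Lt_def[abs_def]
  by (intro has_vector_derivative_Pair has_vector_derivative_minus Pq_deriv[unfolded has_real_derivative_iff_has_vector_derivative]
        Pz_deriv[unfolded has_real_derivative_iff_has_vector_derivative])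

lemma dPz_ends: "dPz (pi/2) = 0" "dPz (-(pi/2)) = 0"
proof -
  have e: "G / 2 = g / (2*h)" using Gh h_pos by (simp add: field_simps)
  show "dPz (pi/2) = 0" "dPz (-(pi/2)) = 0" unfolding dPz_def e by simp_all
qed

lemma Pq_ends: "Pq (pi/2) = 0" "Pq (-(pi/2)) = 0" unfolding Pq_def by simp_all

lemma Pq_nonneg: "-(pi/2) \<le> \<phi> \<Longrightarrow> \<phi> \<le> pi/2 \<Longrightarrow> Pq \<phi> \<ge> 0"
  unfolding Pq_def rho_def using h_pos cos_ge_zero by simp

lemma Pq_pos: "-(pi/2) < \<phi> \<Longrightarrow> \<phi> < pi/2 \<Longrightarrow> Pq \<phi> > 0"
  unfolding Pq_def rho_def using h_pos cos_gt_zero_pi by simp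

lemma on_indic:
  assumes r: "-(pi/2) \<le> \<phi>" "\<phi> \<le> pi/2" and R: "\<bar>fst R\<bar> = Pq \<phi>" "snd R = Pz \<phi>"
  shows "fK g R = 1" "fPhi g R = \<phi>"
proof -
  have q: "fq R = Pq \<phi>" using R unfolding fq_def by simp
  have A: "fA g R = rho \<phi> * sin \<phi>" unfolding fA_def q fZ_def R(2) Pz_def Pq_def using h_pos
    by (simp add: field_simps)
  have hq: "h\<^sup>2 * (rho \<phi> * cos \<phi> / h)\<^sup>2 = (rho \<phi>)\<^sup>2 * (cos \<phi>)\<^sup>2"
    using h_pos by (simp add: power_divide power_mult_distrib)
  have "fB g R = (rho \<phi> * sin \<phi>)\<^sup>2 + (rho \<phi>)\<^sup>2 * (cos \<phi>)\<^sup>2"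
    unfolding B_alt A q Pq_def hq ..
  also have "\<dots> = (rho \<phi>)\<^sup>2 * ((sin \<phi>)\<^sup>2 + (cos \<phi>)\<^sup>2)"
    by (simp only: power_mult_distrib distrib_left)
  finally have B: "fB g R = (rho \<phi>)\<^sup>2" by (simp only: sin_cos_squared_add mult_1_right)
  have rp: "rho \<phi> > 0" unfolding rho_def by simp
  have R0: "R \<noteq> 0"
  proof
    assume "R = 0"
    then have "fB g R = 0" unfolding fB_def fq_def fZ_def by simp
    then show False using B rp by simp
  qed
  have sB: "sqrt (fB g R) = rho \<phi>" using B rp by simp
  show P: "fPhi g R = \<phi>" unfolding Phi_arcsin[OF R0] sB A using rp r arcsin_sin[of \<phi>] by simp
  show "fK g R = 1" unfolding indic_iff P sB using R0 by (simp add: rho_def)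
qed

lemma Rt_indic: "-(pi/2) \<le> \<phi> \<Longrightarrow> \<phi> \<le> pi/2 \<Longrightarrow> fK g (Rt \<phi>) = 1 \<and> fPhi g (Rt \<phi>) = \<phi>"
  using on_indic[of \<phi> "Rt \<phi>"] Pq_nonneg[of \<phi>] unfolding Rt_def by simp

lemma Lt_indic: "-(pi/2) \<le> \<phi> \<Longrightarrow> \<phi> \<le> pi/2 \<Longrightarrow> fK g (Lt \<phi>) = 1 \<and> fPhi g (Lt \<phi>) = \<phi>"
  using on_indic[of \<phi> "Lt \<phi>"] Pq_nonneg[of \<phi>] unfolding Lt_def by simp

lemma indic_param:
  assumes "fK g R = 1"
  shows "-(pi/2) \<le> fPhi g R \<and> fPhi g R \<le> pi/2 \<and> (if fst R \<ge> 0 then R = Rt (fPhi g R) else R = Lt (fPhi g R))"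
proof -
  have R: "R \<noteq> 0" "sqrt (fB g R) = exp (- (G * fPhi g R / 2))" using assms indic_iff by auto
  define \<phi> where "\<phi> = fPhi g R"
  have sB: "sqrt (fB g R) = rho \<phi>" using R(2) unfolding rho_def \<phi>_def .
  have q: "fq R = Pq \<phi>" using inv_cos[OF R(1)] h_pos unfolding sB Pq_def \<phi>_def by (simp add: field_simps)
  have z: "snd R = Pz \<phi>" using inv_sin[OF R(1)] q h_pos unfolding sB Pz_def \<phi>_def fA_def fZ_def Pq_def
    by (simp add: field_simps)
  show ?thesis using Phi_range[OF R(1)] q z unfolding \<phi>_def fq_def Rt_def Lt_def
    by (auto simp: prod_eq_iff)
qed

end

context fin begin

definition "f1 t = Rt (2*pi*t)"
definition "f2 t = Lt (pi - 2*pi*t)"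
definition "f3 t = Rt (2*pi*t - 2*pi)"
definition "d1 t = (2*pi) *\<^sub>R (dPq (2*pi*t), dPz (2*pi*t))"
definition "d2 t = (-(2*pi)) *\<^sub>R (- dPq (pi - 2*pi*t), dPz (pi - 2*pi*t))"
definition "d3 t = (2*pi) *\<^sub>R (dPq (2*pi*t - 2*pi), dPz (2*pi*t - 2*pi))"
definition "f23 t = (if t \<le> 3/4 then f2 t else f3 t)"
definition "d23 t = (if t \<le> 3/4 then d2 t else d3 t)"
definition "gam t = (if t \<le> 1/4 then f1 t else f23 t)"
definition "dgam t = (if t \<le> 1/4 then d1 t else d23 t)"

lemma lin_vd: "((\<lambda>t. a * t + b) has_vector_derivative a) (at t)" for a b :: real
  unfolding has_real_derivative_iff_has_vector_derivative[symmetric]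
  by (rule derivative_eq_intros refl | simp)+

lemma f1_vd: "(f1 has_vector_derivative d1 t) (at t)"
proof -
  have "((Rt \<circ> (\<lambda>t. 2*pi*t + 0)) has_vector_derivative (2*pi) *\<^sub>R (dPq (2*pi*t+0), dPz (2*pi*t+0))) (at t)"
    by (rule vector_diff_chain_at[OF lin_vd Rt_vd])
  then show ?thesis unfolding f1_def[abs_def] d1_def o_def by simp
qed

lemma f2_vd: "(f2 has_vector_derivative d2 t) (at t)"
proof -
  have "((Lt \<circ> (\<lambda>t. (-(2*pi))*t + pi)) has_vector_derivative (-(2*pi)) *\<^sub>R (- dPq ((-(2*pi))*t + pi), dPz ((-(2*pi))*t + pi))) (at t)"
    by (rule vector_diff_chain_at[OF lin_vd Lt_vd])
  moreover have "(-(2*pi))*t + pi = pi - 2*pi*t" by simp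
  ultimately show ?thesis unfolding f2_def[abs_def] d2_def o_def by simp
qed

lemma f3_vd: "(f3 has_vector_derivative d3 t) (at t)"
proof -
  have "((Rt \<circ> (\<lambda>t. 2*pi*t + (-2*pi))) has_vector_derivative (2*pi) *\<^sub>R (dPq (2*pi*t+(-2*pi)), dPz (2*pi*t+(-2*pi)))) (at t)"
    by (rule vector_diff_chain_at[OF lin_vd Rt_vd])
  moreover have "2*pi*t + (-2*pi) = 2*pi*t - 2*pi" by simp
  ultimately show ?thesis unfolding f3_def[abs_def] d3_def o_def by simp
qed

lemma e34: "pi - 2*pi*(3/4) = -(pi/2)" "2*pi*(3/4) - 2*pi = -(pi/2)" by simp_all
lemma e14: "pi - 2*pi*(1/4) = pi/2" "2*pi*(1/4) = pi/2" by simp_all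

lemma f23_vd: "(f23 has_vector_derivative d23 t) (at t)"
  unfolding f23_def[abs_def] d23_def
  by (rule piece_deriv[OF f2_vd f3_vd])
     (auto simp: f2_def f3_def d2_def d3_def e34 Lt_def Rt_def Pq_ends dPz_ends)

lemma gam_vd: "(gam has_vector_derivative dgam t) (at t)"
  unfolding gam_def[abs_def] dgam_def
  by (rule piece_deriv[OF f1_vd f23_vd])
     (auto simp: f1_def f2_def f23_def d1_def d2_def d23_def e14 Lt_def Rt_def Pq_ends dPz_ends)

lemma cont_dPq: "continuous_on UNIV dPq" unfolding dPq_def[abs_def] rho_def
  using h_pos by (intro continuous_intros) auto
lemma cont_dPz: "continuous_on UNIV dPz" unfolding dPz_def[abs_def] rho_def
  using h_pos by (intro continuous_intros) auto

lemma cont_dgam: "continuous_on UNIV dgam"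
proof -
  have c: "continuous_on UNIV (\<lambda>t. dP (a * t + b))" if "continuous_on UNIV dP" for dP :: "real \<Rightarrow> real" and a b
    by (rule continuous_on_compose2[OF that]) (auto intro!: continuous_intros)
  have c1: "continuous_on UNIV d1" unfolding d1_def[abs_def]
    using c[OF cont_dPq, of "2*pi" 0] c[OF cont_dPz, of "2*pi" 0] by (auto intro!: continuous_intros)
  have c2: "continuous_on UNIV d2" unfolding d2_def[abs_def]
    using c[OF cont_dPq, of "-(2*pi)" pi] c[OF cont_dPz, of "-(2*pi)" pi] by (auto intro!: continuous_intros)
  have c3: "continuous_on UNIV d3" unfolding d3_def[abs_def]
    using c[OF cont_dPq, of "2*pi" "-2*pi"] c[OF cont_dPz, of "2*pi" "-2*pi"] by (auto intro!: continuous_intros)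
  have c23: "continuous_on UNIV d23" unfolding d23_def[abs_def]
    by (rule piece_cont[OF c2 c3]) (auto simp: d2_def d3_def e34 dPz_ends)
  show ?thesis unfolding dgam_def[abs_def]
    by (rule piece_cont[OF c1 c23]) (auto simp: d1_def d2_def d23_def e14 dPz_ends)
qed

end

context fin begin

definition "psi t = (if t \<le> 1/4 then 2*t else if t \<le> 3/4 then 1 - 2*t else 2*t - (2::real))"
definition "sg t = (if t < 1/4 \<or> t > 3/4 then 1 else if t = 1/4 \<or> t = 3/4 then 0 else (-1::real))"

lemma gam_char: assumes t: "0 \<le> t" "t \<le> 1"
  shows "fK g (gam t) = 1 \<and> fPhi g (gam t) = pi * psi t \<and> sgn (fst (gam t)) = sg t"
proof -
  consider "t < 1/4" | "t = 1/4" | "1/4 < t \<and> t < 3/4" | "t = 3/4" | "3/4 < t" by linarith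
  then show ?thesis
  proof cases
    case 1
    have p: "0 \<le> pi * t" using t by simp
    have r24: "2*pi*t \<le> pi/2" "2*pi*t < pi/2" using t 1 by auto
    have r13: "-(pi/2) \<le> 2*pi*t" "-(pi/2) < 2*pi*t" using p pi_gt_zero by linarith+
    note r = r13(1) r24(1) r13(2) r24(2)
    show ?thesis using Rt_indic[OF r(1,2)] Pq_pos[OF r(3,4)] 1
      unfolding gam_def f1_def psi_def sg_def by (simp add: Rt_def)
  next
    case 2
    have e: "2*pi*t = pi/2" using 2 by simp
    have r: "-(pi/2) \<le> 2*pi*t" "2*pi*t \<le> pi/2" unfolding e by auto
    have t4: "t = 1/4" using 2 by simp
    show ?thesis using Rt_indic[OF r(1,2)] 2 Pq_ends
      unfolding gam_def f1_def psi_def sg_def e by (simp add: Rt_def t4)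
  next
    case 3
    have m: "pi * (1/4) < pi * t" "pi * t < pi * (3/4)" using 3 by simp_all
    have r: "-(pi/2) \<le> pi - 2*pi*t" "pi - 2*pi*t \<le> pi/2" "-(pi/2) < pi - 2*pi*t" "pi - 2*pi*t < pi/2"
      using m by linarith+
    show ?thesis using Lt_indic[OF r(1,2)] Pq_pos[OF r(3,4)] 3
      unfolding gam_def f23_def f2_def psi_def sg_def by (simp add: Lt_def algebra_simps)
  next
    case 4
    have t4: "t = 3/4" using 4 by simp
    have e: "pi - 2*pi*t = -(pi/2)" unfolding t4 by simp
    have r: "-(pi/2) \<le> pi - 2*pi*t" "pi - 2*pi*t \<le> pi/2" unfolding e by auto
    show ?thesis using Lt_indic[OF r(1,2)] 4 Pq_ends
      unfolding gam_def f23_def f2_def psi_def sg_def e by (simp add: Lt_def t4)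
  next
    case 5
    have m: "pi * (3/4) < pi * t" "pi * t \<le> pi * 1" using 5 t by simp_all
    have r: "-(pi/2) \<le> 2*pi*t - 2*pi" "2*pi*t - 2*pi \<le> pi/2" "-(pi/2) < 2*pi*t - 2*pi" "2*pi*t - 2*pi < pi/2"
      using m pi_gt_zero by linarith+
    show ?thesis using Rt_indic[OF r(1,2)] Pq_pos[OF r(3,4)] 5
      unfolding gam_def f23_def f3_def psi_def sg_def by (simp add: Rt_def algebra_simps)
  qed
qed

lemma lf_arith:
  assumes "0 \<le> x" "x \<le> 1" "0 \<le> y" "y \<le> 1" "psi x = psi y" "sg x = sg y"
  shows "x = y \<or> x = 0 \<and> y = 1 \<or> x = 1 \<and> y = 0"
  using assms unfolding psi_def sg_def by (auto split: if_splits)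

lemma gam_once: "once_around g gam"
proof -
  have cont: "continuous_on {0..1} gam"
    using gam_vd has_vector_derivative_continuous continuous_at_imp_continuous_on by blast
  have lf: "loop_free gam"
    unfolding loop_free_def
  proof (intro ballI impI)
    fix x y :: real assume xy: "x \<in> {0..1}" "y \<in> {0..1}" "gam x = gam y"
    have "pi * psi x = pi * psi y" "sg x = sg y"
      using gam_char[of x] gam_char[of y] xy by auto
    then show "x = y \<or> x = 0 \<and> y = 1 \<or> x = 1 \<and> y = 0"
      using lf_arith[of x y] xy by auto
  qed
  have cl: "pathfinish gam = pathstart gam"
    unfolding pathfinish_def pathstart_def gam_def f23_def f1_def f3_def by simp
  have img: "path_image gam = indicatrix g"
  proof
    show "path_image gam \<subseteq> indicatrix g"
      unfolding path_image_def indicatrix_def using gam_char by auto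
    show "indicatrix g \<subseteq> path_image gam"
    proof
      fix R assume "R \<in> indicatrix g"
      then have K: "fK g R = 1" unfolding indicatrix_def by simp
      define \<phi> where "\<phi> = fPhi g R"
      have P: "-(pi/2) \<le> \<phi>" "\<phi> \<le> pi/2" "if fst R \<ge> 0 then R = Rt \<phi> else R = Lt \<phi>"
        using indic_param[OF K] unfolding \<phi>_def by auto
      have "\<exists>t\<in>{0..1}. gam t = R"
      proof (cases "fst R \<ge> 0")
        case True
        then have R: "R = Rt \<phi>" using P by simp
        show ?thesis
        proof (cases "\<phi> \<ge> 0")
          case True
          show ?thesis
            by (rule bexI[of _ "\<phi> / (2*pi)"]) (use True P R in \<open>auto simp: gam_def f1_def\<close>)
        next
          case False
          show ?thesis
          proof (cases "\<phi> = -(pi/2)")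
            case True
            show ?thesis
              by (rule bexI[of _ "3/4"]) (use True R in \<open>auto simp: gam_def f23_def f2_def Lt_def Rt_def Pq_ends\<close>)
          next
            case F2: False
            have t: "3/4 < 1 + \<phi> / (2*pi)" "1 + \<phi> / (2*pi) \<le> 1" using False F2 P by (auto simp: field_simps)
            have "2 * pi * (1 + \<phi> / (2 * pi)) - 2 * pi = \<phi>" by (simp add: field_simps)
            then show ?thesis
              by (intro bexI[of _ "1 + \<phi> / (2*pi)"]) (use t R in \<open>auto simp: gam_def f23_def f3_def\<close>)
          qed
        qed
      next
        case False
        then have R: "R = Lt \<phi>" using P by simp
        show ?thesis
        proof (cases "\<phi> = pi/2")
          case True
          have R2: "R = Rt (pi/2)" using R True by (simp add: Lt_def Rt_def Pq_ends)
          show ?thesis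
            by (rule bexI[of _ "1/4"]) (use R2 in \<open>auto simp: gam_def f1_def\<close>)
        next
          case F2: False
          have t: "1/4 < (pi - \<phi>) / (2*pi)" "(pi - \<phi>) / (2*pi) \<le> 3/4" "0 \<le> (pi - \<phi>) / (2*pi)"
            using F2 P by (auto simp: field_simps)
          have "pi - 2 * pi * ((pi - \<phi>) / (2 * pi)) = \<phi>" by (simp add: field_simps)
          then show ?thesis
            by (intro bexI[of _ "(pi - \<phi>) / (2*pi)"]) (use t R P in \<open>auto simp: gam_def f23_def f2_def\<close>)
        qed
      qed
      then show "R \<in> path_image gam" unfolding path_image_def by auto
    qed
  qed
  have C1: "gam C1_differentiable_on {0..1}"
    unfolding C1_differentiable_on_def
    using gam_vd continuous_on_subset[OF cont_dgam] by blast
  show ?thesis unfolding once_around_def simple_path_def path_def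
    using cont lf cl img C1 by simp
qed

end

theorem theorem1p3:
  fixes g :: real
  assumes "-2 < g" and "g < 2"
  shows "(\<exists>\<gamma>. once_around g \<gamma>)
    \<and> (\<forall>\<gamma>. once_around g \<gamma> \<longrightarrow>
          (finsler_speed g \<gamma> has_integral (2 * pi / fh g)) {0..1})
    \<and> 2 * pi / fh g \<ge> 2 * pi
    \<and> (2 * pi / fh g = 2 * pi \<longleftrightarrow> g = 0)
    \<and> filterlim (\<lambda>x. 2 * pi / fh x) at_top (at_left 2)
    \<and> filterlim (\<lambda>x. 2 * pi / fh x) at_top (at_right (-2))"
proof -
  interpret fin g using assms by unfold_locales
  have e1: "\<exists>\<gamma>. once_around g \<gamma>" using gam_once by blast
  have e2: "\<forall>\<gamma>. once_around g \<gamma> \<longrightarrow> (finsler_speed g \<gamma> has_integral (2 * pi / fh g)) {0..1}"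
    using integral_all unfolding h_def by blast
  have hp: "fh g > 0" using h_pos unfolding h_def .
  have h1: "fh g \<le> 1" unfolding fh_def by simp
  have e3: "2 * pi / fh g \<ge> 2 * pi" using hp h1 by (simp add: field_simps)
  have e4: "2 * pi / fh g = 2 * pi \<longleftrightarrow> g = 0"
  proof -
    have "2 * pi / fh g = 2 * pi \<longleftrightarrow> fh g = 1" using hp by (auto simp: field_simps)
    also have "\<dots> \<longleftrightarrow> g = 0" unfolding fh_def by simp
    finally show ?thesis .
  qed
  have e5: "filterlim (\<lambda>x. 2 * pi / fh x) at_top (at_left 2)"
    unfolding fh_def by real_asymp
  have e6: "filterlim (\<lambda>x. 2 * pi / fh x) at_top (at_right (-2))"
    unfolding fh_def by real_asymp
  show ?thesis using e1 e2 e3 e4 e5 e6 by blast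
qed

end
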